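(* Let $Q\colon \mathbb{R}^n\to\mathbb{R}$ be a quadratic form, and let $\mathbb{R}^n_+=\{(a_1,\dots,a_n)\mid a_i\ge 0 \text{ for all } i\}$ with interior $\mathrm{Int}(\mathbb{R}^n_+)=\{(a_1,\dots,a_n)\mid a_i>0 \text{ for all } i\}$. Assume there exist $a,b\in\mathbb{R}^n_+$ with $Q(a)>0$ and $Q(b)<0$. Then there exists an open set $U\subset \mathrm{Int}(\mathbb{R}^n_+)$ such that $U\cap Q^{-1}(0)$ is a nonempty smooth submanifold of $U$ of codimension $1$. *)

theory Defs
  imports "HOL-Analysis.Analysis"
begin

definition quadratic_form :: "(real^'n \<Rightarrow> real) \<Rightarrow> bool" where
  "quadratic_form Q \<longleftrightarrow> (\<exists>A :: real^'n^'n. \<forall>x. Q x = x \<bullet> (A *v x))"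

definition nonneg_orthant :: "(real^'n) set" where
  "nonneg_orthant = {x. \<forall>i. 0 \<le> x $ i}"

definition pos_orthant :: "(real^'n) set" where
  "pos_orthant = {x. \<forall>i. 0 < x $ i}"

primrec Ck_on :: "nat \<Rightarrow> 'a::real_normed_vector set \<Rightarrow> ('a \<Rightarrow> 'b::real_normed_vector) \<Rightarrow> bool" where
  "Ck_on 0 S f = continuous_on S f"
| "Ck_on (Suc k) S f =
     (f differentiable_on S \<and> (\<forall>v. Ck_on k S (\<lambda>x. frechet_derivative f (at x) v)))"

definition smooth_on :: "'a::real_normed_vector set \<Rightarrow> ('a \<Rightarrow> 'b::real_normed_vector) \<Rightarrow> bool" where
  "smooth_on S f \<longleftrightarrow> (\<forall>k. Ck_on k S f)"

definition diffeo_between :: "('a::real_normed_vector \<Rightarrow> 'b::real_normed_vector) \<Rightarrow> 'a set \<Rightarrow> 'b set \<Rightarrow> bool" where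
  "diffeo_between \<phi> V W \<longleftrightarrow> open V \<and> open W \<and> \<phi> ` V = W \<and> smooth_on V \<phi> \<and>
     (\<exists>\<psi>. \<psi> ` W = V \<and> smooth_on W \<psi> \<and> (\<forall>x\<in>V. \<psi> (\<phi> x) = x) \<and> (\<forall>y\<in>W. \<phi> (\<psi> y) = y))"

definition smooth_submanifold_codim1 :: "(real^'n) set \<Rightarrow> (real^'n) set \<Rightarrow> bool" where
  "smooth_submanifold_codim1 M U \<longleftrightarrow> open U \<and> M \<subseteq> U \<and>
     (\<forall>p\<in>M. \<exists>V W (\<phi> :: real^'n \<Rightarrow> real^'n) i. p \<in> V \<and> V \<subseteq> U \<and> diffeo_between \<phi> V W \<and>
        \<phi> ` (M \<inter> V) = {y \<in> W. y $ i = 0})"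

end

theory Submission
  imports Defs
begin


lemma vec_has_derivative:
  fixes f :: "'a::real_normed_vector \<Rightarrow> real^'n"
  assumes "\<And>j. ((\<lambda>x. f x $ j) has_derivative (\<lambda>v. f' v $ j)) (at a)"
  shows "(f has_derivative f') (at a)"
proof -
  have "\<forall>b\<in>Basis. ((\<lambda>x. f x \<bullet> b) has_derivative (\<lambda>x. f' x \<bullet> b)) (at a)"
  proof
    fix b :: "real^'n" assume "b \<in> Basis"
    then obtain j where b: "b = axis j 1" by (auto simp: Basis_vec_def)
    show "((\<lambda>x. f x \<bullet> b) has_derivative (\<lambda>x. f' x \<bullet> b)) (at a)"
      using assms[of j] by (simp add: b inner_axis)
  qed
  then show ?thesis using has_derivative_componentwise_within by blast
qed

lemma Ck_on_cong:
  assumes "open S" "Ck_on k S f" "\<And>x. x \<in> S \<Longrightarrow> f x = g x"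
  shows "Ck_on k S g"
  using assms(2,3)
proof (induction k arbitrary: f g)
  case 0
  then show ?case using continuous_on_cong by (metis Ck_on.simps(1))
next
  case (Suc k)
  have d: "f differentiable_on S" "\<forall>v. Ck_on k S (\<lambda>x. frechet_derivative f (at x) v)"
    using Suc.prems by auto
  have gd: "(g has_derivative frechet_derivative f (at x)) (at x)" if "x \<in> S" for x
  proof -
    have "f differentiable at x" using d(1) that assms(1)
      by (metis at_within_open differentiable_on_def)
    then have "(f has_derivative frechet_derivative f (at x)) (at x)"
      using frechet_derivative_works by blast
    then show ?thesis
      using has_derivative_transform_within_open[OF _ assms(1) that] Suc.prems(2) by blast
  qed
  have "g differentiable_on S"
    using gd by (meson differentiable_at_withinI differentiable_def differentiable_on_def)
  moreover have "Ck_on k S (\<lambda>x. frechet_derivative g (at x) v)" for v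
  proof -
    have eq: "frechet_derivative f (at x) v = frechet_derivative g (at x) v" if "x \<in> S" for x
      using frechet_derivative_at[OF gd[OF that]] by simp
    show ?thesis by (rule Suc.IH[OF d(2)[rule_format, of v]]) (rule eq)
  qed
  ultimately show ?case by simp
qed

lemma smooth_by_class:
  assumes S: "open S"
    and cl: "\<And>f. P f \<Longrightarrow> \<exists>f'. (\<forall>x\<in>S. (f has_derivative f' x) (at x)) \<and> (\<forall>v. P (\<lambda>x. f' x v))"
    and "P f"
  shows "smooth_on S f"
  unfolding smooth_on_def
proof
  fix k show "Ck_on k S f" using \<open>P f\<close>
  proof (induction k arbitrary: f)
    case 0
    obtain f' where "\<forall>x\<in>S. (f has_derivative f' x) (at x)" using cl[OF 0] by blast
    then show ?case
      unfolding Ck_on.simps by (meson continuous_at_imp_continuous_on has_derivative_continuous)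
  next
    case (Suc k)
    obtain f' where f': "\<forall>x\<in>S. (f has_derivative f' x) (at x)" "\<forall>v. P (\<lambda>x. f' x v)"
      using cl[OF Suc.prems] by blast
    have "f differentiable_on S" using f'(1)
      by (meson differentiable_at_withinI differentiable_def differentiable_on_def)
    moreover have "Ck_on k S (\<lambda>x. frechet_derivative f (at x) v)" for v
    proof (rule Ck_on_cong[OF S])
      show "Ck_on k S (\<lambda>x. f' x v)" using Suc.IH f'(2) by blast
      show "f' x v = frechet_derivative f (at x) v" if "x \<in> S" for x
        using frechet_derivative_at f'(1) that by metis
    qed
    ultimately show ?case by simp
  qed
qed



lemma root1:
  fixes L a c :: real
  assumes L: "L > 0" and D: "L^2 + 4*a*c \<ge> 0"
  defines "s \<equiv> sqrt (L^2 + 4*a*c)"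
  defines "t \<equiv> 2 * c / (L + s)"
  shows "t * L + t^2 * a = c"
proof -
  have s2: "s^2 = L^2 + 4*a*c" unfolding s_def by (rule real_sqrt_pow2[OF D])
  have s0: "s \<ge> 0" unfolding s_def by (rule real_sqrt_ge_zero[OF D])
  have pos: "L + s > 0" using L s0 by linarith
  have tt: "t * (L + s) = 2 * c" using pos by (simp add: t_def)
  have "(t * L + t^2 * a - c) * (L + s)^2 = (t*(L+s))*L*(L+s) + (t*(L+s))^2*a - c*(L+s)^2"
    by (simp add: power2_eq_square algebra_simps)
  also have "\<dots> = 2*c*L*(L+s) + (2*c)^2*a - c*(L+s)^2" by (simp only: tt)
  also have "\<dots> = c * (L^2 + 4*a*c - s^2)" by (simp add: power2_eq_square algebra_simps)
  finally have "(t * L + t^2 * a - c) * (L + s)^2 = c * (L^2 + 4*a*c - s^2)" .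
  then have "(t * L + t^2 * a - c) * (L + s)^2 = 0" using s2 by simp
  then show ?thesis using pos by simp
qed

lemma root2:
  fixes Lz Lx a t0 :: real
  assumes "Lz > 0" "Lx > 0" "Lx = Lz + 2 * t0 * a"
  shows "Lz^2 + 4*a*(t0*Lz + t0^2*a) = Lx^2"
    and "2 * (t0*Lz + t0^2*a) / (Lz + sqrt (Lz^2 + 4*a*(t0*Lz + t0^2*a))) = t0"
proof -
  show e: "Lz^2 + 4*a*(t0*Lz + t0^2*a) = Lx^2"
    using assms(3) by (simp add: power2_eq_square algebra_simps)
  have "sqrt (Lz^2 + 4*a*(t0*Lz + t0^2*a)) = Lx" using e assms(2) by simp
  moreover have "Lz + Lx > 0" using assms by simp
  ultimately show "2 * (t0*Lz + t0^2*a) / (Lz + sqrt (Lz^2 + 4*a*(t0*Lz + t0^2*a))) = t0"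
    using assms(3) by (simp add: field_simps power2_eq_square)
qed


inductive Rc :: "(real^'n) set \<Rightarrow> (real^'n \<Rightarrow> real) \<Rightarrow> bool" for S where
  rc_const: "Rc S (\<lambda>x. c)"
| rc_proj: "Rc S (\<lambda>x. x $ j)"
| rc_add: "Rc S f \<Longrightarrow> Rc S g \<Longrightarrow> Rc S (\<lambda>x. f x + g x)"
| rc_mult: "Rc S f \<Longrightarrow> Rc S g \<Longrightarrow> Rc S (\<lambda>x. f x * g x)"
| rc_inv: "Rc S f \<Longrightarrow> (\<forall>x\<in>S. f x \<noteq> 0) \<Longrightarrow> Rc S (\<lambda>x. inverse (f x))"
| rc_sqrt: "Rc S f \<Longrightarrow> (\<forall>x\<in>S. f x > 0) \<Longrightarrow> Rc S (\<lambda>x. sqrt (f x))"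

lemma Rc_deriv:
  assumes "Rc S f"
  shows "\<exists>f'. (\<forall>x\<in>S. (f has_derivative f' x) (at x)) \<and> (\<forall>v. Rc S (\<lambda>x. f' x v))"
  using assms
proof (induction rule: Rc.induct)
  case (rc_const c)
  show ?case by (rule exI[of _ "\<lambda>x v. 0"]) (auto intro: Rc.intros)
next
  case (rc_proj j)
  show ?case
    by (rule exI[of _ "\<lambda>x v. v $ j"]) (auto intro: Rc.intros bounded_linear_imp_has_derivative bounded_linear_vec_nth)
next
  case (rc_add f g)
  then obtain f' g' where f': "\<forall>x\<in>S. (f has_derivative f' x) (at x)" "\<forall>v. Rc S (\<lambda>x. f' x v)"
    and g': "\<forall>x\<in>S. (g has_derivative g' x) (at x)" "\<forall>v. Rc S (\<lambda>x. g' x v)" by blast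
  show ?case
    by (rule exI[of _ "\<lambda>x v. f' x v + g' x v"]) (use f' g' in \<open>auto intro: Rc.intros has_derivative_add\<close>)
next
  case (rc_mult f g)
  then obtain f' g' where f': "\<forall>x\<in>S. (f has_derivative f' x) (at x)" "\<forall>v. Rc S (\<lambda>x. f' x v)"
    and g': "\<forall>x\<in>S. (g has_derivative g' x) (at x)" "\<forall>v. Rc S (\<lambda>x. g' x v)" by blast
  show ?case
  proof (rule exI[of _ "\<lambda>x v. f x * g' x v + f' x v * g x"], intro conjI ballI allI)
    fix x assume "x \<in> S"
    then show "((\<lambda>x. f x * g x) has_derivative (\<lambda>v. f x * g' x v + f' x v * g x)) (at x)"
      using f' g' by (auto intro: has_derivative_mult)
  next
    fix v show "Rc S (\<lambda>x. f x * g' x v + f' x v * g x)"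
    proof -
      have "Rc S f" "Rc S g" using rc_mult by auto
      then show ?thesis using f'(2) g'(2) Rc.rc_mult[of S f "\<lambda>x. g' x v"] Rc.rc_mult[of S "\<lambda>x. f' x v" g]
        by (intro Rc.rc_add) auto
    qed
  qed
next
  case (rc_inv f)
  then obtain f' where f': "\<forall>x\<in>S. (f has_derivative f' x) (at x)" "\<forall>v. Rc S (\<lambda>x. f' x v)" by blast
  show ?case
  proof (rule exI[of _ "\<lambda>x v. (- 1) * (f' x v * (inverse (f x) * inverse (f x)))"], intro conjI ballI allI)
    fix x assume x: "x \<in> S"
    have "(inverse has_derivative (*) (- (inverse (f x) ^ Suc (Suc 0)))) (at (f x))"
      using DERIV_inverse[of "f x"] rc_inv.hyps(2) x unfolding has_field_derivative_def by blast
    from has_derivative_compose[OF f'(1)[rule_format, OF x] this]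
    show "((\<lambda>x. inverse (f x)) has_derivative (\<lambda>v. (- 1) * (f' x v * (inverse (f x) * inverse (f x))))) (at x)"
      by (simp add: power2_eq_square algebra_simps)
  next
    fix v show "Rc S (\<lambda>x. (- 1) * (f' x v * (inverse (f x) * inverse (f x))))"
    proof -
      have i: "Rc S (\<lambda>x. inverse (f x))" using Rc.rc_inv rc_inv by blast
      have "Rc S (\<lambda>x. f' x v)" using f' by blast
      from Rc.rc_mult[OF Rc.rc_const[of S "- 1"] Rc.rc_mult[OF this Rc.rc_mult[OF i i]]]
      show ?thesis .
    qed
  qed
next
  case (rc_sqrt f)
  then obtain f' where f': "\<forall>x\<in>S. (f has_derivative f' x) (at x)" "\<forall>v. Rc S (\<lambda>x. f' x v)" by blast
  have rs: "Rc S (\<lambda>x. sqrt (f x))" using rc_sqrt by (auto intro: Rc.intros)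
  show ?case
  proof (rule exI[of _ "\<lambda>x v. f' x v * (inverse (sqrt (f x)) * (1/2))"], intro conjI ballI allI)
    fix x assume x: "x \<in> S"
    have "(sqrt has_derivative (*) (inverse (sqrt (f x)) / 2)) (at (f x))"
      using DERIV_real_sqrt[of "f x"] rc_sqrt.hyps(2) x unfolding has_field_derivative_def by blast
    from has_derivative_compose[OF f'(1)[rule_format, OF x] this]
    show "((\<lambda>x. sqrt (f x)) has_derivative (\<lambda>v. f' x v * (inverse (sqrt (f x)) * (1/2)))) (at x)"
      by (simp add: algebra_simps)
  next
    fix v show "Rc S (\<lambda>x. f' x v * (inverse (sqrt (f x)) * (1/2)))"
    proof -
      have "\<forall>x\<in>S. sqrt (f x) \<noteq> 0" using rc_sqrt by auto
      then have i: "Rc S (\<lambda>x. inverse (sqrt (f x)))" using Rc.rc_inv[OF rs] by blast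
      have "Rc S (\<lambda>x. f' x v)" using f' by blast
      from Rc.rc_mult[OF this Rc.rc_mult[OF i Rc.rc_const[of S "1/2"]]]
      show ?thesis .
    qed
  qed
qed

lemma Rc_sum: "finite K \<Longrightarrow> (\<And>k. k \<in> K \<Longrightarrow> Rc S (f k)) \<Longrightarrow> Rc S (\<lambda>x. \<Sum>k\<in>K. f k x)"
proof (induction K rule: finite_induct)
  case empty then show ?case by (simp add: rc_const)
next
  case (insert a K) then show ?case by (simp add: rc_add)
qed

lemma Rc_quad:
  fixes B :: "real^'n^'n"
  assumes "\<And>j. Rc S (\<lambda>x. u x $ j)" "\<And>j. Rc S (\<lambda>x. w x $ j)"
  shows "Rc S (\<lambda>x. u x \<bullet> (B *v w x))"
proof -
  have "Rc S (\<lambda>x. \<Sum>k\<in>UNIV. u x $ k * (\<Sum>l\<in>UNIV. B $ k $ l * w x $ l))"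
    by (intro Rc_sum rc_mult assms rc_const) auto
  then show ?thesis by (simp add: inner_vec_def matrix_vector_mult_def)
qed

definition Pv :: "(real^'n) set \<Rightarrow> (real^'n \<Rightarrow> real^'m) \<Rightarrow> bool" where
  "Pv S F \<longleftrightarrow> (\<forall>j. Rc S (\<lambda>x. F x $ j))"

lemma Pv_smooth:
  fixes F :: "real^'n \<Rightarrow> real^'m"
  assumes "open S" "Pv S F" shows "smooth_on S F"
proof (rule smooth_by_class[where P="Pv S :: (real^'n \<Rightarrow> real^'m) \<Rightarrow> bool", OF assms(1) _ assms(2)])
  fix F assume "Pv S F"
  then have "\<forall>j. \<exists>f'. (\<forall>x\<in>S. ((\<lambda>x. F x $ j) has_derivative f' x) (at x)) \<and> (\<forall>v. Rc S (\<lambda>x. f' x v))"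
    unfolding Pv_def using Rc_deriv by blast
  then obtain f' where f': "\<And>j. (\<forall>x\<in>S. ((\<lambda>x. F x $ j) has_derivative f' j x) (at x)) \<and> (\<forall>v. Rc S (\<lambda>x. f' j x v))"
    by metis
  show "\<exists>F'. (\<forall>x\<in>S. (F has_derivative F' x) (at x)) \<and> (\<forall>v. Pv S (\<lambda>x. F' x v))"
  proof (rule exI[of _ "\<lambda>x v. \<chi> j. f' j x v"], intro conjI ballI allI)
    fix x assume "x \<in> S"
    then show "(F has_derivative (\<lambda>v. \<chi> j. f' j x v)) (at x)"
      using f' by (intro vec_has_derivative) simp
  next
    fix v show "Pv S (\<lambda>x. \<chi> j. f' j x v)" using f' by (simp add: Pv_def)
  qed
qed

lemma Rc_cont: assumes "Rc S f" shows "continuous_on S f"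
proof -
  obtain f' where "\<forall>x\<in>S. (f has_derivative f' x) (at x)" using Rc_deriv[OF assms] by blast
  then show ?thesis by (meson continuous_at_imp_continuous_on has_derivative_continuous)
qed



lemma open_pos_orthant: "open (pos_orthant :: (real^'n) set)"
proof -
  have eq: "pos_orthant = (\<Inter>j\<in>UNIV. {x::real^'n. 0 < x $ j})" by (auto simp: pos_orthant_def)
  have "open (\<Inter>j\<in>UNIV. {x::real^'n. 0 < x $ j})"
  proof (rule open_INT)
    show "\<forall>j\<in>UNIV. open {x::real^'n. 0 < x $ j}"
      by (intro ballI open_Collect_less) (auto intro: Rc_cont rc_const rc_proj)
  qed simp
  then show ?thesis by (simp only: eq)
qed

lemma chart:
  fixes A :: "real^'n^'n" and Q :: "real^'n \<Rightarrow> real" and p :: "real^'n"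
  assumes Qdef: "\<And>x. Q x = x \<bullet> (A *v x)"
    and p: "p \<in> pos_orthant" "Q p = 0"
    and Lp: "axis i 1 \<bullet> (A *v p) + p \<bullet> (A *v axis i 1) > 0"
  shows "\<exists>U. open U \<and> U \<subseteq> pos_orthant \<and> U \<inter> Q -` {0} \<noteq> {} \<and>
           smooth_submanifold_codim1 (U \<inter> Q -` {0}) U"
proof -
  define e where "e = (axis i 1 :: real^'n)"
  define L where "L x = e \<bullet> (A *v x) + x \<bullet> (A *v e)" for x
  define \<alpha> where "\<alpha> = Q e"
  define z where "z y = (\<chi> j. if j = i then p$i else y$j)" for y :: "real^'n"
  define \<phi> where "\<phi> x = (\<chi> j. if j = i then Q x else x$j)" for x
  define c where "c y = y$i - Q (z y)" for y
  define D where "D y = (L (z y))^2 + 4*\<alpha>*c y" for y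
  define t where "t y = 2 * c y / (L (z y) + sqrt (D y))" for y
  define \<psi> where "\<psi> y = (\<chi> j. if j = i then p$i + t y else y$j)" for y
  define V where "V = {x. x \<in> pos_orthant \<and> L x > 0 \<and> L (z x) > 0}"
  define W0 where "W0 = {y. L (z y) > 0 \<and> D y > 0}"
  define W where "W = W0 \<inter> \<psi> -` V"

  have expand: "Q (w + s *\<^sub>R e) = Q w + s * L w + s^2 * \<alpha>" for w s
    unfolding Qdef L_def \<alpha>_def
    by (simp add: matrix_vector_right_distrib matrix_vector_mult_scaleR inner_add_left inner_add_right
        power2_eq_square algebra_simps)
  have Llin: "L (w + s *\<^sub>R e) = L w + 2 * s * \<alpha>" for w s
    unfolding Qdef L_def \<alpha>_def
    by (simp add: matrix_vector_right_distrib matrix_vector_mult_scaleR inner_add_left inner_add_right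
        algebra_simps)
  have zdec: "x = z x + (x$i - p$i) *\<^sub>R e" for x
    by (simp add: vec_eq_iff z_def e_def axis_def)
  have z\<phi>: "z (\<phi> x) = z x" for x by (simp add: vec_eq_iff z_def \<phi>_def)
  have z\<psi>: "z (\<psi> y) = z y" for y by (simp add: vec_eq_iff z_def \<psi>_def)
  have \<psi>dec: "\<psi> y = z y + t y *\<^sub>R e" for y
    by (simp add: vec_eq_iff z_def \<psi>_def e_def axis_def)
  have zp: "z p = p" by (simp add: vec_eq_iff z_def)

  have K1: "Q (\<psi> y) = y$i" "\<phi> (\<psi> y) = y" if y: "y \<in> W0" for y
  proof -
    have Lz: "L (z y) > 0" and Dp: "D y > 0" using y by (auto simp: W0_def)
    have "t y * L (z y) + (t y)^2 * \<alpha> = c y"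
      using root1[of "L (z y)" \<alpha> "c y"] Lz Dp unfolding t_def D_def by simp
    then show q: "Q (\<psi> y) = y$i" unfolding \<psi>dec expand by (simp add: c_def)
    then show "\<phi> (\<psi> y) = y" by (simp add: vec_eq_iff \<phi>_def \<psi>_def)
  qed
  have K2: "\<phi> x \<in> W0" "\<psi> (\<phi> x) = x" if x: "x \<in> V" for x
  proof -
    define t0 where "t0 = x$i - p$i"
    have Lx: "L x > 0" and Lz: "L (z x) > 0" using x by (auto simp: V_def)
    have Lxe: "L x = L (z x) + 2 * t0 * \<alpha>" using Llin zdec t0_def by metis
    have Qx: "Q x = Q (z x) + t0 * L (z x) + t0^2 * \<alpha>" using expand zdec t0_def by metis
    have "\<phi> x $ i = Q x" by (simp add: \<phi>_def)
    then have cx: "c (\<phi> x) = t0 * L (z x) + t0^2 * \<alpha>"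
      by (simp add: c_def z\<phi> Qx)
    have Dx: "D (\<phi> x) = (L x)^2"
      unfolding D_def z\<phi> cx using root2(1)[OF Lz Lx Lxe] .
    then show "\<phi> x \<in> W0" using Lx Lz by (simp add: W0_def z\<phi>)
    have "t (\<phi> x) = t0"
      unfolding t_def z\<phi> D_def cx using root2(2)[OF Lz Lx Lxe] .
    then show "\<psi> (\<phi> x) = x" using zdec[of x] unfolding \<psi>dec z\<phi> t0_def by simp
  qed

  have Rz: "Rc S (\<lambda>y. z y $ j)" for S j
    by (cases "j = i") (simp_all add: z_def rc_const rc_proj)
  have Re: "Rc S (\<lambda>y. e $ j)" for S j by (rule rc_const)
  have Rid: "Rc S (\<lambda>y. y $ j)" for S j by (rule rc_proj)
  have RQ: "Rc S (\<lambda>y. Q y)" for S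
    unfolding Qdef by (rule Rc_quad[OF Rid Rid])
  have RQz: "Rc S (\<lambda>y. Q (z y))" for S
    unfolding Qdef by (rule Rc_quad[OF Rz Rz])
  have RL: "Rc S (\<lambda>y. L y)" for S
    unfolding L_def by (rule rc_add[OF Rc_quad[OF Re Rid] Rc_quad[OF Rid Re]])
  have RLz: "Rc S (\<lambda>y. L (z y))" for S
    unfolding L_def by (rule rc_add[OF Rc_quad[OF Re Rz] Rc_quad[OF Rz Re]])
  have Rcc: "Rc S (\<lambda>y. c y)" for S
  proof -
    have "Rc S (\<lambda>y. y $ i + (- 1) * Q (z y))" by (rule rc_add[OF Rid rc_mult[OF rc_const RQz]])
    then show ?thesis by (simp add: c_def)
  qed
  have RD: "Rc S (\<lambda>y. D y)" for S
  proof -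
    have "Rc S (\<lambda>y. L (z y) * L (z y) + (4 * \<alpha>) * c y)"
      by (rule rc_add[OF rc_mult[OF RLz RLz] rc_mult[OF rc_const Rcc]])
    then show ?thesis by (simp add: D_def power2_eq_square mult.assoc)
  qed
  have Rt: "Rc S (\<lambda>y. t y)" if S: "S \<subseteq> W0" for S
  proof -
    have Ds: "\<forall>y\<in>S. D y > 0" using S by (auto simp: W0_def)
    have sq: "Rc S (\<lambda>y. sqrt (D y))" by (rule rc_sqrt[OF RD Ds])
    have nz: "\<forall>y\<in>S. L (z y) + sqrt (D y) \<noteq> 0"
    proof
      fix y assume "y \<in> S"
      then have "L (z y) > 0" using S by (auto simp: W0_def)
      moreover have "sqrt (D y) \<ge> 0" using Ds \<open>y \<in> S\<close> by auto
      ultimately show "L (z y) + sqrt (D y) \<noteq> 0" by linarith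
    qed
    have "Rc S (\<lambda>y. (2 * c y) * inverse (L (z y) + sqrt (D y)))"
      by (rule rc_mult[OF rc_mult[OF rc_const Rcc] rc_inv[OF rc_add[OF RLz sq] nz]])
    then show ?thesis by (simp add: t_def divide_inverse)
  qed
  have P\<phi>: "Pv S \<phi>" for S
    unfolding Pv_def
  proof
    fix j show "Rc S (\<lambda>x. \<phi> x $ j)"
      by (cases "j = i") (simp_all add: \<phi>_def RQ rc_proj)
  qed
  have P\<psi>: "Pv S \<psi>" if "S \<subseteq> W0" for S
    unfolding Pv_def
  proof
    fix j show "Rc S (\<lambda>x. \<psi> x $ j)"
      by (cases "j = i") (simp_all add: \<psi>_def rc_proj rc_add[OF rc_const Rt[OF that]])
  qed

  have contU: "continuous_on UNIV f" if "Rc UNIV f" for f using Rc_cont that by blast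
  have oV: "open V"
  proof -
    have "V = pos_orthant \<inter> {x. 0 < L x} \<inter> {x. 0 < L (z x)}" by (auto simp: V_def)
    moreover have "open {x. 0 < L x}" by (rule open_Collect_less) (auto intro: contU rc_const RL)
    moreover have "open {x. 0 < L (z x)}" by (rule open_Collect_less) (auto intro: contU rc_const RLz)
    ultimately show ?thesis using open_pos_orthant by auto
  qed
  have oW0: "open W0"
  proof -
    have "W0 = {y. 0 < L (z y)} \<inter> {y. 0 < D y}" by (auto simp: W0_def)
    moreover have "open {x. 0 < L (z x)}" by (rule open_Collect_less) (auto intro: contU rc_const RLz)
    moreover have "open {x. 0 < D x}" by (rule open_Collect_less) (auto intro: contU rc_const RD)
    ultimately show ?thesis by auto
  qed
  have s\<psi>0: "smooth_on W0 \<psi>" by (rule Pv_smooth[OF oW0 P\<psi>]) simp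
  then have "continuous_on W0 \<psi>" unfolding smooth_on_def by (metis Ck_on.simps(1))
  then have oW: "open W" unfolding W_def by (rule continuous_open_preimage[OF _ oW0 oV])
  have WW0: "W \<subseteq> W0" by (auto simp: W_def)

  have imgV: "\<phi> ` V = W"
  proof
    show "\<phi> ` V \<subseteq> W" using K2 by (auto simp: W_def)
    show "W \<subseteq> \<phi> ` V"
    proof
      fix y assume "y \<in> W"
      then have "y = \<phi> (\<psi> y)" "\<psi> y \<in> V" using K1 by (auto simp: W_def)
      then show "y \<in> \<phi> ` V" by blast
    qed
  qed
  have imgW: "\<psi> ` W = V"
  proof
    show "\<psi> ` W \<subseteq> V" by (auto simp: W_def)
    show "V \<subseteq> \<psi> ` W"
    proof
      fix x assume "x \<in> V"
      then have "x = \<psi> (\<phi> x)" "\<phi> x \<in> W" using K2 by (auto simp: W_def)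
      then show "x \<in> \<psi> ` W" by blast
    qed
  qed
  have diffeo: "diffeo_between \<phi> V W"
    unfolding diffeo_between_def
  proof (intro conjI exI[of _ \<psi>])
    show "smooth_on V \<phi>" by (rule Pv_smooth[OF oV P\<phi>])
    show "smooth_on W \<psi>" by (rule Pv_smooth[OF oW P\<psi>[OF WW0]])
  qed (use oV oW imgV imgW K1 K2 WW0 in auto)
  have slice: "\<phi> ` ((V \<inter> Q -` {0}) \<inter> V) = {y \<in> W. y $ i = 0}"
  proof
    show "\<phi> ` ((V \<inter> Q -` {0}) \<inter> V) \<subseteq> {y \<in> W. y $ i = 0}"
      using imgV by (auto simp: \<phi>_def)
    show "{y \<in> W. y $ i = 0} \<subseteq> \<phi> ` ((V \<inter> Q -` {0}) \<inter> V)"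
    proof
      fix y assume y: "y \<in> {y \<in> W. y $ i = 0}"
      then have "y = \<phi> (\<psi> y)" "\<psi> y \<in> V" "Q (\<psi> y) = 0" using K1 by (auto simp: W_def)
      then show "y \<in> \<phi> ` ((V \<inter> Q -` {0}) \<inter> V)" by blast
    qed
  qed
  have pV: "p \<in> V"
    using p Lp by (simp add: V_def zp L_def e_def)
  show ?thesis
  proof (intro exI[of _ V] conjI)
    show "open V" by fact
    show "V \<subseteq> pos_orthant" by (auto simp: V_def)
    show "V \<inter> Q -` {0} \<noteq> {}" using pV p by auto
    show "smooth_submanifold_codim1 (V \<inter> Q -` {0}) V"
      unfolding smooth_submanifold_codim1_def
      using oV diffeo slice by blast
  qed
qed



lemma perturb:
  fixes q l k :: real
  assumes q: "q > 0"
  shows "\<exists>\<epsilon>>0. q + \<epsilon>*l + \<epsilon>^2*k > 0"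
proof -
  define M where "M = \<bar>l\<bar> + \<bar>k\<bar>"
  define \<epsilon> where "\<epsilon> = min 1 (q / (2*M + 1))"
  have M0: "M \<ge> 0" by (simp add: M_def)
  have e0: "\<epsilon> > 0" using q M0 by (simp add: \<epsilon>_def)
  have e1: "\<epsilon> \<le> 1" by (simp add: \<epsilon>_def)
  have "\<epsilon> \<le> q / (2*M + 1)" by (simp add: \<epsilon>_def)
  then have e2: "\<epsilon> * (2*M + 1) \<le> q" using M0 by (simp add: field_simps)
  have l1: "- \<bar>l\<bar> \<le> l" and k1: "- \<bar>k\<bar> \<le> k" by linarith+
  have "\<epsilon> * (- \<bar>l\<bar>) \<le> \<epsilon> * l" by (rule mult_left_mono[OF l1]) (use e0 in simp)
  then have "\<epsilon>*l \<ge> - (\<epsilon>*\<bar>l\<bar>)" by simp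
  moreover have "\<epsilon>^2 * (- \<bar>k\<bar>) \<le> \<epsilon>^2 * k" by (rule mult_left_mono[OF k1]) simp
  then have "\<epsilon>^2*k \<ge> - (\<epsilon>^2*\<bar>k\<bar>)" by simp
  moreover have "\<epsilon>^2*\<bar>k\<bar> \<le> \<epsilon>*\<bar>k\<bar>" using e0 e1
    by (simp add: power2_eq_square mult_right_mono)
  moreover have "\<epsilon>*M < q"
  proof -
    have "\<epsilon>*M \<ge> 0" using e0 M0 by simp
    moreover have "\<epsilon> * (2*M + 1) = 2*(\<epsilon>*M) + \<epsilon>" by (simp add: algebra_simps)
    ultimately show ?thesis using e2 e0 by linarith
  qed
  ultimately have "q + \<epsilon>*l + \<epsilon>^2*k > 0" by (simp add: M_def algebra_simps)
  then show ?thesis using e0 by blast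
qed

theorem lemma1:
  fixes Q :: "real^'n \<Rightarrow> real"
  assumes "quadratic_form Q"
    and "a \<in> nonneg_orthant" and "b \<in> nonneg_orthant"
    and "Q a > 0" and "Q b < 0"
  shows "\<exists>U. open U \<and> U \<subseteq> pos_orthant \<and> U \<inter> Q -` {0} \<noteq> {} \<and>
           smooth_submanifold_codim1 (U \<inter> Q -` {0}) U"
proof -
  obtain A :: "real^'n^'n" where Qdef: "\<And>x. Q x = x \<bullet> (A *v x)"
    using assms(1) unfolding quadratic_form_def by blast
  define Ld where "Ld d x = d \<bullet> (A *v x) + x \<bullet> (A *v d)" for d x :: "real^'n"
  have expand: "Q (w + s *\<^sub>R d) = Q w + s * Ld d w + s^2 * Q d" for w d s
    unfolding Qdef Ld_def
    by (simp add: matrix_vector_right_distrib matrix_vector_mult_scaleR inner_add_left inner_add_right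
        power2_eq_square algebra_simps)
  define one :: "real^'n" where "one = (\<chi> j. 1)"
  obtain \<epsilon>1 where e1: "\<epsilon>1 > 0" "Q a + \<epsilon>1 * Ld one a + \<epsilon>1^2 * Q one > 0"
    using perturb[OF assms(4)] by blast
  obtain \<epsilon>2 where e2: "\<epsilon>2 > 0" "- Q b + \<epsilon>2 * (- Ld one b) + \<epsilon>2^2 * (- Q one) > 0"
    using perturb[of "- Q b" "- Ld one b" "- Q one"] assms(5) by auto
  define a' where "a' = a + \<epsilon>1 *\<^sub>R one"
  define b' where "b' = b + \<epsilon>2 *\<^sub>R one"
  have Qa': "Q a' > 0" unfolding a'_def expand using e1 by simp
  have Qb': "Q b' < 0" unfolding b'_def expand using e2 by simp
  have a'p: "0 < a' $ j" for j
    using assms(2) e1(1) by (simp add: a'_def one_def nonneg_orthant_def add_nonneg_pos)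
  have b'p: "0 < b' $ j" for j
    using assms(3) e2(1) by (simp add: b'_def one_def nonneg_orthant_def add_nonneg_pos)
  define d where "d = b' - a'"
  define f where "f s = Q a' + s * Ld d a' + s^2 * Q d" for s
  have fQ: "f s = Q (a' + s *\<^sub>R d)" for s by (simp add: f_def expand)
  have "\<exists>t0. 0 \<le> t0 \<and> t0 \<le> 1 \<and> f t0 = 0"
  proof (rule IVT2)
    show "f 1 \<le> 0" using Qb' fQ[of 1] by (simp add: d_def)
    show "0 \<le> f 0" using Qa' by (simp add: f_def)
    show "\<forall>x. 0 \<le> x \<and> x \<le> 1 \<longrightarrow> isCont f x" unfolding f_def by (auto intro!: continuous_intros)
  qed simp
  then obtain t0 where t0: "0 \<le> t0" "t0 \<le> 1" "f t0 = 0" by blast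
  define p where "p = a' + t0 *\<^sub>R d"
  have Qp: "Q p = 0" using t0 fQ by (simp add: p_def)
  have pp: "p \<in> pos_orthant"
  proof -
    have "p $ j = (1 - t0) * a' $ j + t0 * b' $ j" for j by (simp add: p_def d_def algebra_simps)
    moreover have "(1 - t0) * a' $ j + t0 * b' $ j > 0" for j
    proof (cases "t0 = 1")
      case True then show ?thesis using b'p by simp
    next
      case False
      then have "(1 - t0) * a' $ j > 0" using t0 a'p by simp
      moreover have "t0 * b' $ j \<ge> 0" using t0(1) b'p[of j] by simp
      ultimately show ?thesis by linarith
    qed
    ultimately show ?thesis by (simp add: pos_orthant_def)
  qed
  define G where "G = A *v p + p v* A"
  have LdG: "Ld v p = v \<bullet> G" for v
    by (simp add: Ld_def G_def inner_add_right dot_lmul_matrix[symmetric] inner_commute)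
  have "\<exists>i. G $ i \<noteq> 0"
  proof (rule ccontr)
    assume "\<not> (\<exists>i. G $ i \<noteq> 0)"
    then have "G = 0" by (simp add: vec_eq_iff)
    then have L0: "Ld d p = 0" by (simp add: LdG)
    have fs: "f s = (s - t0)^2 * Q d" for s
    proof -
      have "a' + s *\<^sub>R d = p + (s - t0) *\<^sub>R d" by (simp add: p_def algebra_simps)
      then show ?thesis using fQ[of s] expand[of p "s - t0" d] Qp L0 by simp
    qed
    have "f 0 > 0" using Qa' by (simp add: f_def)
    then have "Q d > 0" using fs[of 0] by (simp add: zero_less_mult_iff)
    moreover have "f 1 < 0" using Qb' fQ[of 1] by (simp add: d_def)
    then have "Q d < 0" using fs[of 1] by (simp add: mult_less_0_iff)
    ultimately show False by simp
  qed
  then obtain i where Gi: "G $ i \<noteq> 0" by blast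
  have LGi: "axis i 1 \<bullet> (A *v p) + p \<bullet> (A *v axis i 1) = G $ i"
    using LdG[of "axis i 1"] by (simp add: Ld_def inner_axis')
  show ?thesis
  proof (cases "G $ i > 0")
    case True
    then show ?thesis using chart[OF Qdef pp Qp, of i] LGi by simp
  next
    case False
    then have neg: "G $ i < 0" using Gi by simp
    have mA: "(- A) *v x = - (A *v x)" for x
      by (simp add: vec_eq_iff matrix_vector_mult_def sum_negf)
    define Q' where "Q' x = - Q x" for x
    have Q'def: "Q' x = x \<bullet> ((- A) *v x)" for x by (simp add: Q'_def Qdef mA)
    have pre: "Q' -` {0} = Q -` {0}" by (auto simp: Q'_def)
    have pos: "axis i 1 \<bullet> ((- A) *v p) + p \<bullet> ((- A) *v axis i 1) > 0"
      using neg LGi by (simp add: mA)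
    have Q'p: "Q' p = 0" using Qp by (simp add: Q'_def)
    from chart[OF Q'def pp Q'p pos] show ?thesis unfolding pre .
  qed
qed

end
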